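(* For every finite connected undirected unweighted graph $G=(V,E)$ with $n$ vertices, every $r\ge 1$ and every $S_0\subseteq V$, $\mathrm{fp}^{1/2,r}_G(S_0)\ge |S_0|/n$.
   Context: The $\lambda$-mixed Moran process on a connected graph $G=(V,E)$ with $n=|V|\ge 2$: each vertex hosts a resident (fitness $1$) or mutant (fitness $r>0$); the state is the mutant set $S_t\subseteq V$. Each step, independently: with probability $\lambda$ a Birth-death step (a vertex $u$ chosen with probability proportional to fitness among all vertices; a uniformly random neighbor of $u$ takes $u$'s type); with probability $1-\lambda$ a death-Birth step (a uniformly random vertex $v$ dies; a neighbor $u$ of $v$ chosen with probability proportional to fitness among the neighbors of $v$; $v$ takes $u$'s type). $\mathrm{fp}^{\lambda,r}_G(S_0)$ is the probability that the process started at $S_0$ reaches $S_t=V$. *)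

theory Defs
  imports Complex_Main
begin

definition conn_graph :: "'a set \<Rightarrow> ('a \<Rightarrow> 'a \<Rightarrow> bool) \<Rightarrow> bool" where
  "conn_graph V E \<longleftrightarrow> finite V \<and> card V \<ge> 2
     \<and> (\<forall>u v. E u v \<longrightarrow> u \<in> V \<and> v \<in> V)
     \<and> (\<forall>u v. E u v \<longrightarrow> E v u)
     \<and> (\<forall>u. \<not> E u u)
     \<and> (\<forall>u\<in>V. \<forall>v\<in>V. E\<^sup>*\<^sup>* u v)"

definition nbrs :: "'a set \<Rightarrow> ('a \<Rightarrow> 'a \<Rightarrow> bool) \<Rightarrow> 'a \<Rightarrow> 'a set" where
  "nbrs V E u = {v \<in> V. E u v}"

text \<open>fitness of vertex x in state S (mutant set)\<close>
definition fit :: "real \<Rightarrow> 'a set \<Rightarrow> 'a \<Rightarrow> real" where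
  "fit r S x = (if x \<in> S then r else 1)"

definition repl :: "'a set \<Rightarrow> 'a \<Rightarrow> 'a \<Rightarrow> 'a set" where
  "repl S u v = (if u \<in> S then insert v S else S - {v})"

definition bd_trans :: "'a set \<Rightarrow> ('a \<Rightarrow> 'a \<Rightarrow> bool) \<Rightarrow> real \<Rightarrow> 'a set \<Rightarrow> 'a set \<Rightarrow> real" where
  "bd_trans V E r S T =
     (\<Sum>u\<in>V. \<Sum>v\<in>nbrs V E u.
        (fit r S u / (\<Sum>x\<in>V. fit r S x)) * (1 / real (card (nbrs V E u)))
        * (if repl S u v = T then 1 else 0))"

definition db_trans :: "'a set \<Rightarrow> ('a \<Rightarrow> 'a \<Rightarrow> bool) \<Rightarrow> real \<Rightarrow> 'a set \<Rightarrow> 'a set \<Rightarrow> real" where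
  "db_trans V E r S T =
     (\<Sum>v\<in>V. \<Sum>u\<in>nbrs V E v.
        (1 / real (card V)) * (fit r S u / (\<Sum>x\<in>nbrs V E v. fit r S x))
        * (if repl S u v = T then 1 else 0))"

definition mixed_trans :: "'a set \<Rightarrow> ('a \<Rightarrow> 'a \<Rightarrow> bool) \<Rightarrow> real \<Rightarrow> real \<Rightarrow> 'a set \<Rightarrow> 'a set \<Rightarrow> real" where
  "mixed_trans V E lam r S T = lam * bd_trans V E r S T + (1 - lam) * db_trans V E r S T"

fun msteps :: "'a set \<Rightarrow> ('a \<Rightarrow> 'a \<Rightarrow> bool) \<Rightarrow> real \<Rightarrow> real \<Rightarrow> nat \<Rightarrow> 'a set \<Rightarrow> 'a set \<Rightarrow> real" where
  "msteps V E lam r 0 S T = (if S = T then 1 else 0)"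
| "msteps V E lam r (Suc t) S T = (\<Sum>U\<in>Pow V. mixed_trans V E lam r S U * msteps V E lam r t U T)"

text \<open>Fixation probability: probability of ever reaching the absorbing state V,
  which equals the limit of the probability of being at V at time t.\<close>
definition fp :: "'a set \<Rightarrow> ('a \<Rightarrow> 'a \<Rightarrow> bool) \<Rightarrow> real \<Rightarrow> real \<Rightarrow> 'a set \<Rightarrow> real" where
  "fp V E lam r S0 = lim (\<lambda>t. msteps V E lam r t S0 V)"

end

theory Submission
  imports Defs
begin

locale mp =
  fixes V :: "'a set" and E :: "'a \<Rightarrow> 'a \<Rightarrow> bool" and r :: real
  assumes cg: "conn_graph V E" and r1: "r \<ge> 1"
begin

lemma finV: "finite V" using cg by (simp add: conn_graph_def)
lemma n2: "card V \<ge> 2" using cg by (simp add: conn_graph_def)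
lemma EV: "E u v \<Longrightarrow> u \<in> V \<and> v \<in> V" using cg by (simp add: conn_graph_def)
lemma Esym: "E u v \<Longrightarrow> E v u" using cg by (simp add: conn_graph_def)
lemma Econn: "u \<in> V \<Longrightarrow> v \<in> V \<Longrightarrow> E\<^sup>*\<^sup>* u v" using cg by (simp add: conn_graph_def)

lemma nbrs_ne: assumes "u \<in> V" shows "nbrs V E u \<noteq> {}"
proof -
  have "\<not> V \<subseteq> {u}"
  proof
    assume "V \<subseteq> {u}"
    hence "card V \<le> 1" using card_mono[of "{u}" V] by simp
    with n2 show False by simp
  qed
  then obtain w where w: "w \<in> V" "w \<noteq> u" by blast
  have "E\<^sup>*\<^sup>* u w" using Econn assms w by blast
  then obtain z where "E u z" using w(2) by (metis converse_rtranclpE)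
  then show ?thesis using EV unfolding nbrs_def by blast
qed

lemma fin_nbrs: "finite (nbrs V E u)" using finV unfolding nbrs_def by simp
lemma nbrs_sub: "nbrs V E u \<subseteq> V" unfolding nbrs_def by auto
lemma deg_pos: "u \<in> V \<Longrightarrow> card (nbrs V E u) > 0"
  using nbrs_ne fin_nbrs by (simp add: card_gt_0_iff)
lemma deg_le: "card (nbrs V E u) \<le> card V"
  using card_mono[OF finV nbrs_sub] .

lemma fit_ge1: "fit r S x \<ge> 1" using r1 by (simp add: fit_def)
lemma fit_le: "fit r S x \<le> r" using r1 by (simp add: fit_def)
lemma fit_pos: "fit r S x > 0" using fit_ge1[of S x] by linarith

lemma F_ge: "(\<Sum>x\<in>V. fit r S x) \<ge> real (card V)"
proof -
  have "(\<Sum>x\<in>V. (1::real)) \<le> (\<Sum>x\<in>V. fit r S x)" by (rule sum_mono) (rule fit_ge1)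
  thus ?thesis by simp
qed
lemma F_le: "(\<Sum>x\<in>V. fit r S x) \<le> r * real (card V)"
proof -
  have "(\<Sum>x\<in>V. fit r S x) \<le> (\<Sum>x\<in>V. r)" by (rule sum_mono) (rule fit_le)
  thus ?thesis by (simp add: mult.commute)
qed
lemma Fn_ge: "(\<Sum>x\<in>nbrs V E v. fit r S x) \<ge> real (card (nbrs V E v))"
proof -
  have "(\<Sum>x\<in>nbrs V E v. (1::real)) \<le> (\<Sum>x\<in>nbrs V E v. fit r S x)" by (rule sum_mono) (rule fit_ge1)
  thus ?thesis by simp
qed
lemma Fn_le: "(\<Sum>x\<in>nbrs V E v. fit r S x) \<le> r * real (card (nbrs V E v))"
proof -
  have "(\<Sum>x\<in>nbrs V E v. fit r S x) \<le> (\<Sum>x\<in>nbrs V E v. r)" by (rule sum_mono) (rule fit_le)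
  thus ?thesis by (simp add: mult.commute)
qed

lemma repl_sub: "S \<subseteq> V \<Longrightarrow> v \<in> V \<Longrightarrow> repl S u v \<in> Pow V"
  unfolding repl_def by auto

end

lemma sum_ind:
  assumes "finite A" "\<And>u. u \<in> A \<Longrightarrow> finite (B u)" "\<And>u v. u \<in> A \<Longrightarrow> v \<in> B u \<Longrightarrow> g u v \<in> P" "finite P"
  shows "(\<Sum>U\<in>P. (\<Sum>u\<in>A. \<Sum>v\<in>B u. c u v * (if g u v = U then 1 else 0)) * (\<phi> U :: real))
        = (\<Sum>u\<in>A. \<Sum>v\<in>B u. c u v * \<phi> (g u v))"
proof -
  have "(\<Sum>U\<in>P. (\<Sum>u\<in>A. \<Sum>v\<in>B u. c u v * (if g u v = U then 1 else 0)) * \<phi> U)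
      = (\<Sum>U\<in>P. \<Sum>u\<in>A. \<Sum>v\<in>B u. (if g u v = U then c u v * \<phi> U else 0))"
    by (simp add: sum_distrib_right; intro sum.cong refl; simp)
  also have "\<dots> = (\<Sum>u\<in>A. \<Sum>U\<in>P. \<Sum>v\<in>B u. (if g u v = U then c u v * \<phi> U else 0))"
    by (rule sum.swap)
  also have "\<dots> = (\<Sum>u\<in>A. \<Sum>v\<in>B u. \<Sum>U\<in>P. (if g u v = U then c u v * \<phi> U else 0))"
    by (rule sum.cong[OF refl], rule sum.swap)
  also have "\<dots> = (\<Sum>u\<in>A. \<Sum>v\<in>B u. c u v * \<phi> (g u v))"
    using assms by (intro sum.cong refl) (simp add: sum.delta)
  finally show ?thesis .
qed


context mp begin

definition FF where "FF S = (\<Sum>x\<in>V. fit r S x)"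
definition dg where "dg u = real (card (nbrs V E u))"
definition Fn where "Fn S v = (\<Sum>x\<in>nbrs V E v. fit r S x)"
definition wt where "wt S u v = fit r S u / FF S / dg u / 2 + fit r S u / Fn S v / real (card V) / 2"
abbreviation T where "T S U \<equiv> mixed_trans V E (1/2) r S U"

lemma nb_sum: "(\<Sum>v\<in>nbrs V E u. f v) = (\<Sum>v\<in>V. if E u v then f v else 0)"
  unfolding nbrs_def by (simp add: sum.inter_filter finV)

lemma bd_exp: assumes "S \<subseteq> V"
  shows "(\<Sum>U\<in>Pow V. bd_trans V E r S U * \<phi> U)
       = (\<Sum>u\<in>V. \<Sum>v\<in>nbrs V E u. (fit r S u / FF S * (1 / dg u)) * \<phi> (repl S u v))"
  unfolding bd_trans_def FF_def dg_def
  using sum_ind[of V "nbrs V E" "\<lambda>u v. repl S u v" "Pow V"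
      "\<lambda>u v. fit r S u / (\<Sum>x\<in>V. fit r S x) * (1 / real (card (nbrs V E u)))" \<phi>]
    assms finV fin_nbrs nbrs_sub repl_sub by blast

lemma db_exp: assumes "S \<subseteq> V"
  shows "(\<Sum>U\<in>Pow V. db_trans V E r S U * \<phi> U)
       = (\<Sum>v\<in>V. \<Sum>u\<in>nbrs V E v. (1 / real (card V) * (fit r S u / Fn S v)) * \<phi> (repl S u v))"
  unfolding db_trans_def Fn_def
  using sum_ind[of V "nbrs V E" "\<lambda>v u. repl S u v" "Pow V"
      "\<lambda>v u. 1 / real (card V) * (fit r S u / (\<Sum>x\<in>nbrs V E v. fit r S x))" \<phi>]
    assms finV fin_nbrs nbrs_sub repl_sub by blast

lemma texp: assumes "S \<subseteq> V"
  shows "(\<Sum>U\<in>Pow V. T S U * \<phi> U)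
       = (\<Sum>u\<in>V. \<Sum>v\<in>V. if E u v then wt S u v * \<phi> (repl S u v) else 0)"
proof -
  have "(\<Sum>U\<in>Pow V. T S U * \<phi> U) = 1/2 * (\<Sum>U\<in>Pow V. bd_trans V E r S U * \<phi> U)
     + 1/2 * (\<Sum>U\<in>Pow V. db_trans V E r S U * \<phi> U)"
    by (simp add: mixed_trans_def sum.distrib sum_distrib_left algebra_simps)
  also have "(\<Sum>U\<in>Pow V. bd_trans V E r S U * \<phi> U) = (\<Sum>u\<in>V. \<Sum>v\<in>V. if E u v then
       (fit r S u / FF S * (1 / dg u)) * \<phi> (repl S u v) else 0)"
    unfolding bd_exp[OF assms] nb_sum ..
  also have "(\<Sum>U\<in>Pow V. db_trans V E r S U * \<phi> U) = (\<Sum>v\<in>V. \<Sum>u\<in>V. if E v u then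
       (1 / real (card V) * (fit r S u / Fn S v)) * \<phi> (repl S u v) else 0)"
    unfolding db_exp[OF assms] nb_sum ..
  also have "\<dots> = (\<Sum>u\<in>V. \<Sum>v\<in>V. if E v u then
       (1 / real (card V) * (fit r S u / Fn S v)) * \<phi> (repl S u v) else 0)"
    by (rule sum.swap)
  also have "\<dots> = (\<Sum>u\<in>V. \<Sum>v\<in>V. if E u v then
       (1 / real (card V) * (fit r S u / Fn S v)) * \<phi> (repl S u v) else 0)"
    using Esym by (intro sum.cong refl) metis
  finally show ?thesis
    by (simp add: sum_distrib_left sum.distrib[symmetric] wt_def algebra_simps if_distrib cong: if_cong)
qed

end


lemma key_ineq:
  fixes F n du dv Fu Fv r :: real
  assumes "r \<ge> 1" "n > 0" "du > 0" "dv > 0" "n \<le> F" "F \<le> r * n" "du \<le> Fu" "Fv \<le> r * dv" "Fv > 0"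
  shows "r / F / du / 2 + r / Fv / n / 2 \<ge> 1 / F / dv / 2 + 1 / Fu / n / 2"
proof -
  have F0: "F > 0" using assms by linarith
  have a: "r / Fv \<ge> 1 / dv"
    using assms by (simp add: field_simps)
  have b: "1 / Fu \<le> 1 / du"
    using assms by (simp add: frac_le)
  have c: "r / F \<ge> 1 / n" using assms F0 by (simp add: field_simps)
  have d: "1 / n \<ge> 1 / F" using assms F0 by (simp add: frac_le)
  have e: "(r / F - 1 / n) / du + (1 / n - 1 / F) / dv \<ge> 0"
    using c d assms by (intro add_nonneg_nonneg divide_nonneg_pos) auto
  have f: "r / Fv / n \<ge> 1 / dv / n" by (rule divide_right_mono[OF a]) (use assms in linarith)
  have g: "1 / Fu / n \<le> 1 / du / n" by (rule divide_right_mono[OF b]) (use assms in linarith)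
  have h: "(r / F - 1 / n) / du + (1 / n - 1 / F) / dv = r / F / du + 1 / dv / n - 1 / F / dv - 1 / du / n"
    by (simp add: diff_divide_distrib mult.commute)
  have k: "1/F/dv + 1/Fu/n \<le> r/F/du + r/Fv/n" using e f g h by linarith
  have "(1/F/dv + 1/Fu/n)/2 \<le> (r/F/du + r/Fv/n)/2" using k by (rule divide_right_mono) simp
  thus ?thesis by (simp add: add_divide_distrib)
qed

lemma swap_diff:
  fixes w p :: "'a \<Rightarrow> 'a \<Rightarrow> real"
  assumes "\<And>u v. E u v \<Longrightarrow> E v u"
  shows "(\<Sum>u\<in>V. \<Sum>v\<in>V. if E u v then w u v * (p u v - p v u) else 0)
       = (\<Sum>u\<in>V. \<Sum>v\<in>V. if E u v then p u v * (w u v - w v u) else 0)"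
proof -
  have 1: "(\<Sum>u\<in>V. \<Sum>v\<in>V. if E u v then w u v * (p u v - p v u) else 0)
     = (\<Sum>u\<in>V. \<Sum>v\<in>V. if E u v then w u v * p u v else 0)
       - (\<Sum>u\<in>V. \<Sum>v\<in>V. if E u v then w u v * p v u else 0)"
    by (simp add: sum_subtractf[symmetric] right_diff_distrib if_distrib cong: if_cong)
  have 2: "(\<Sum>u\<in>V. \<Sum>v\<in>V. if E u v then w u v * p v u else 0)
      = (\<Sum>v\<in>V. \<Sum>u\<in>V. if E u v then w u v * p v u else 0)"
    by (rule sum.swap)
  also have "\<dots> = (\<Sum>u\<in>V. \<Sum>v\<in>V. if E u v then w v u * p u v else 0)"
    using assms by (intro sum.cong refl) (auto simp: mult.commute)
  finally have 3: "(\<Sum>u\<in>V. \<Sum>v\<in>V. if E u v then w u v * p v u else 0) = \<dots>" .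
  have 4: "(\<Sum>u\<in>V. \<Sum>v\<in>V. if E u v then p u v * (w u v - w v u) else 0)
     = (\<Sum>u\<in>V. \<Sum>v\<in>V. if E u v then w u v * p u v else 0)
       - (\<Sum>u\<in>V. \<Sum>v\<in>V. if E u v then w v u * p u v else 0)"
    by (simp add: sum_subtractf[symmetric] right_diff_distrib if_distrib mult.commute cong: if_cong)
  show ?thesis unfolding 1 3 4 ..
qed

lemma boundary_path:
  assumes "R\<^sup>*\<^sup>* a b" "a \<in> S" "b \<notin> S"
  shows "\<exists>u v. R u v \<and> u \<in> S \<and> v \<notin> S"
  using assms by (induction rule: rtranclp_induct) blast+

context mp begin

lemma boundary:
  assumes "S \<subseteq> V" "S \<noteq> {}" "S \<noteq> V"
  shows "\<exists>u v. E u v \<and> u \<in> S \<and> v \<notin> S"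
proof -
  obtain a b where "a \<in> S" "b \<in> V" "b \<notin> S" using assms by blast
  thus ?thesis using boundary_path[of E a b S] Econn assms(1) by blast
qed

lemma FF_pos: "FF S > 0" unfolding FF_def using F_ge[of S] n2 by linarith
lemma dg_pos: "u \<in> V \<Longrightarrow> dg u > 0" unfolding dg_def using deg_pos by simp
lemma Fn_pos: "v \<in> V \<Longrightarrow> Fn S v > 0" unfolding Fn_def using Fn_ge[of v S] deg_pos[of v] by linarith

lemma T_nonneg: "T S U \<ge> 0"
  unfolding mixed_trans_def bd_trans_def db_trans_def
  by (auto intro!: add_nonneg_nonneg mult_nonneg_nonneg sum_nonneg divide_nonneg_nonneg less_imp_le[OF fit_pos])

lemma wt_nonneg: "wt S u v \<ge> 0"
  unfolding wt_def FF_def Fn_def dg_def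
  by (auto intro!: add_nonneg_nonneg mult_nonneg_nonneg sum_nonneg divide_nonneg_nonneg less_imp_le[OF fit_pos])

lemma rowsum: assumes "S \<subseteq> V" shows "(\<Sum>U\<in>Pow V. T S U) = 1"
proof -
  have bd: "(\<Sum>U\<in>Pow V. bd_trans V E r S U) = 1"
  proof -
    have "(\<Sum>U\<in>Pow V. bd_trans V E r S U) = (\<Sum>U\<in>Pow V. bd_trans V E r S U * 1)" by simp
    also have "\<dots> = (\<Sum>u\<in>V. \<Sum>v\<in>nbrs V E u. (fit r S u / FF S * (1 / dg u)) * 1)"
      by (rule bd_exp[OF assms])
    also have "\<dots> = (\<Sum>u\<in>V. fit r S u / FF S)"
      using dg_pos by (intro sum.cong refl) (simp add: dg_def)
    also have "\<dots> = 1" using FF_pos[of S] by (simp add: sum_divide_distrib[symmetric] FF_def)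
    finally show ?thesis .
  qed
  have db: "(\<Sum>U\<in>Pow V. db_trans V E r S U) = 1"
  proof -
    have "(\<Sum>U\<in>Pow V. db_trans V E r S U) = (\<Sum>U\<in>Pow V. db_trans V E r S U * 1)" by simp
    also have "\<dots> = (\<Sum>v\<in>V. \<Sum>u\<in>nbrs V E v. (1 / real (card V) * (fit r S u / Fn S v)) * 1)"
      by (rule db_exp[OF assms])
    also have "\<dots> = (\<Sum>v\<in>V. 1 / real (card V))"
    proof (intro sum.cong refl)
      fix v assume "v \<in> V"
      hence "Fn S v > 0" by (rule Fn_pos)
      thus "(\<Sum>u\<in>nbrs V E v. (1 / real (card V) * (fit r S u / Fn S v)) * 1) = 1 / real (card V)"
        by (simp add: sum_distrib_left[symmetric] sum_divide_distrib[symmetric] Fn_def)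
    qed
    also have "\<dots> = 1" using n2 by simp
    finally show ?thesis .
  qed
  show ?thesis using bd db by (simp add: mixed_trans_def sum.distrib sum_divide_distrib[symmetric])
qed

end


lemma repl_card:
  assumes "finite S"
  shows "real (card (repl S u v)) - real (card S)
       = (if u \<in> S \<and> v \<notin> S then 1 else 0) - (if v \<in> S \<and> u \<notin> S then 1 else 0)"
proof (cases "u \<in> S")
  case True thus ?thesis using assms by (simp add: repl_def card_insert_if)
next
  case False
  show ?thesis
  proof (cases "v \<in> S")
    case True
    hence "card S > 0" using assms card_gt_0_iff by blast
    thus ?thesis using False True assms by (simp add: repl_def card_Diff_singleton of_nat_diff)
  next
    case False2: False
    thus ?thesis using False by (simp add: repl_def)
  qed
qed

context mp begin

lemma wt_ineq:
  assumes "E u v" "u \<in> S" "v \<notin> S"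
  shows "wt S v u \<le> wt S u v"
proof -
  have uv: "u \<in> V" "v \<in> V" using EV assms by auto
  have "r / FF S / dg u / 2 + r / Fn S v / real (card V) / 2 \<ge> 1 / FF S / dg v / 2 + 1 / Fn S u / real (card V) / 2"
  proof (rule key_ineq)
    show "1 \<le> r" by (rule r1)
    show "0 < real (card V)" using n2 by simp
    show "0 < dg u" "0 < dg v" using dg_pos uv by auto
    show "real (card V) \<le> FF S" using F_ge unfolding FF_def .
    show "FF S \<le> r * real (card V)" using F_le unfolding FF_def .
    show "dg u \<le> Fn S u" using Fn_ge unfolding Fn_def dg_def .
    show "Fn S v \<le> r * dg v" using Fn_le unfolding Fn_def dg_def .
    show "0 < Fn S v" using Fn_pos uv by auto
  qed
  thus ?thesis using assms by (simp add: wt_def fit_def)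
qed

lemma drift:
  assumes "S \<subseteq> V"
  shows "(\<Sum>U\<in>Pow V. T S U * real (card U)) \<ge> real (card S)"
proof -
  have finS: "finite S" using assms finV finite_subset by blast
  define p where "p u v = (if u \<in> S \<and> v \<notin> S then 1 else 0 :: real)" for u v
  have "(\<Sum>U\<in>Pow V. T S U * real (card U)) - real (card S)
      = (\<Sum>U\<in>Pow V. T S U * (real (card U) - real (card S)))"
    using rowsum[OF assms] by (simp add: right_diff_distrib sum_subtractf sum_distrib_right[symmetric])
  also have "\<dots> = (\<Sum>u\<in>V. \<Sum>v\<in>V. if E u v then wt S u v * (real (card (repl S u v)) - real (card S)) else 0)"
    by (rule texp[OF assms])
  also have "\<dots> = (\<Sum>u\<in>V. \<Sum>v\<in>V. if E u v then wt S u v * (p u v - p v u) else 0)"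
    unfolding repl_card[OF finS] p_def ..
  also have "\<dots> = (\<Sum>u\<in>V. \<Sum>v\<in>V. if E u v then p u v * (wt S u v - wt S v u) else 0)"
    by (rule swap_diff) (rule Esym)
  also have "\<dots> \<ge> 0"
    using wt_ineq by (intro sum_nonneg) (auto simp: p_def)
  finally show ?thesis by simp
qed

lemma variance:
  assumes "S \<subseteq> V" "S \<noteq> {}" "S \<noteq> V"
  shows "(\<Sum>U\<in>Pow V. T S U * (real (card U) - real (card S))\<^sup>2) \<ge> 1 / (2 * real (card V) ^ 2)"
proof -
  have finS: "finite S" using assms finV finite_subset by blast
  obtain u0 v0 where b: "E u0 v0" "u0 \<in> S" "v0 \<notin> S" using boundary[OF assms] by blast
  have uv: "u0 \<in> V" "v0 \<in> V" using EV b by auto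
  define g where "g u v = (if E u v then wt S u v * (real (card (repl S u v)) - real (card S))\<^sup>2 else 0)" for u v
  have gnn: "g u v \<ge> 0" for u v unfolding g_def using wt_nonneg by simp
  have e1: "(\<Sum>U\<in>Pow V. T S U * (real (card U) - real (card S))\<^sup>2) = (\<Sum>u\<in>V. \<Sum>v\<in>V. g u v)"
    unfolding g_def by (rule texp[OF assms(1)])
  have e2: "(\<Sum>v\<in>V. g u0 v) \<le> (\<Sum>u\<in>V. \<Sum>v\<in>V. g u v)"
    by (rule member_le_sum[OF uv(1)]) (auto intro: sum_nonneg gnn simp: finV)
  have e3: "g u0 v0 \<le> (\<Sum>v\<in>V. g u0 v)"
    by (rule member_le_sum[OF uv(2)]) (auto intro: gnn simp: finV)
  have e4: "g u0 v0 = wt S u0 v0"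
    using b repl_card[OF finS, of u0 v0] by (simp add: g_def)
  have e5: "wt S u0 v0 \<ge> r / FF S / dg u0 / 2"
    unfolding wt_def using b fit_pos[of S u0] Fn_pos[OF uv(2), of S] n2
    by (simp add: fit_def)
  have e6: "r / FF S / dg u0 / 2 \<ge> 1 / (2 * real (card V) ^ 2)"
  proof -
    have n0: "real (card V) > 0" using n2 by simp
    have a: "r / FF S \<ge> 1 / real (card V)"
      using FF_pos[of S] F_le[of S] n0 unfolding FF_def by (simp add: field_simps)
    have c: "1 / dg u0 \<ge> 1 / real (card V)"
      using dg_pos[OF uv(1)] deg_le[of u0] n0 unfolding dg_def by (simp add: frac_le)
    have "r / FF S * (1 / dg u0) \<ge> 1 / real (card V) * (1 / real (card V))"
      by (rule mult_mono[OF a c]) (use n0 dg_pos[OF uv(1)] r1 FF_pos[of S] in auto)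
    thus ?thesis by (simp add: power2_eq_square divide_right_mono)
  qed
  show ?thesis using e1 e2 e3 e4 e5 e6 by linarith
qed

lemma absorb: "(\<Sum>U\<in>Pow V. T V U * \<phi> U) = \<phi> V"
proof -
  have "(\<Sum>U\<in>Pow V. T V U * \<phi> U) = (\<Sum>u\<in>V. \<Sum>v\<in>V. if E u v then wt V u v * \<phi> (repl V u v) else 0)"
    by (rule texp) simp
  also have "\<dots> = (\<Sum>u\<in>V. \<Sum>v\<in>V. if E u v then wt V u v * \<phi> V else 0)"
    using EV by (intro sum.cong refl) (auto simp: repl_def insert_absorb)
  also have "\<dots> = (\<Sum>U\<in>Pow V. T V U * \<phi> V)"
    by (rule texp[symmetric]) simp
  also have "\<dots> = \<phi> V" using rowsum[of V] by (simp add: sum_distrib_right[symmetric])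
  finally show ?thesis .
qed

definition tau :: "'a set \<Rightarrow> real" where "tau S = (if S \<noteq> {} \<and> S \<noteq> V then 1 else 0)"

lemma second:
  assumes "S \<subseteq> V"
  shows "(\<Sum>U\<in>Pow V. T S U * real (card U) ^ 2) \<ge> real (card S) ^ 2 + 1 / (2 * real (card V) ^ 2) * tau S"
proof -
  let ?c = "real (card S)"
  have "(\<Sum>U\<in>Pow V. T S U * real (card U) ^ 2)
     = (\<Sum>U\<in>Pow V. T S U * (real (card U) - ?c)\<^sup>2 + 2 * ?c * (T S U * real (card U)) - ?c^2 * T S U)"
    by (intro sum.cong refl) (simp add: algebra_simps power2_eq_square)
  also have "\<dots> = (\<Sum>U\<in>Pow V. T S U * (real (card U) - ?c)\<^sup>2) + 2 * ?c * (\<Sum>U\<in>Pow V. T S U * real (card U))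
       - ?c^2 * (\<Sum>U\<in>Pow V. T S U)"
    by (simp add: sum.distrib sum_subtractf sum_distrib_left)
  finally have eq: "(\<Sum>U\<in>Pow V. T S U * real (card U) ^ 2) = \<dots>" .
  have v: "(\<Sum>U\<in>Pow V. T S U * (real (card U) - ?c)\<^sup>2) \<ge> 1 / (2 * real (card V) ^ 2) * tau S"
  proof (cases "S \<noteq> {} \<and> S \<noteq> V")
    case True thus ?thesis using variance[OF assms] by (simp add: tau_def)
  next
    case False thus ?thesis by (auto simp: tau_def intro!: sum_nonneg mult_nonneg_nonneg T_nonneg)
  qed
  have d: "2 * ?c * (\<Sum>U\<in>Pow V. T S U * real (card U)) \<ge> 2 * ?c * ?c"
    using drift[OF assms] by (intro mult_left_mono) auto
  show ?thesis unfolding eq rowsum[OF assms] using v d by (simp add: power2_eq_square)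
qed

end


context mp begin

definition Ex where "Ex t \<phi> S = (\<Sum>W\<in>Pow V. msteps V E (1/2) r t S W * \<phi> W)"

lemma Ex_Suc: "Ex (Suc t) \<phi> S = (\<Sum>U\<in>Pow V. T S U * Ex t \<phi> U)"
proof -
  have "Ex (Suc t) \<phi> S = (\<Sum>W\<in>Pow V. \<Sum>U\<in>Pow V. T S U * (msteps V E (1/2) r t U W * \<phi> W))"
    by (simp add: Ex_def sum_distrib_right mult.assoc)
  also have "\<dots> = (\<Sum>U\<in>Pow V. \<Sum>W\<in>Pow V. T S U * (msteps V E (1/2) r t U W * \<phi> W))"
    by (rule sum.swap)
  also have "\<dots> = (\<Sum>U\<in>Pow V. T S U * Ex t \<phi> U)"
    by (simp add: Ex_def sum_distrib_left)
  finally show ?thesis .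
qed

lemma Ex_0: assumes "S \<subseteq> V" shows "Ex 0 \<phi> S = \<phi> S"
proof -
  have "Ex 0 \<phi> S = (\<Sum>W\<in>Pow V. if S = W then \<phi> W else 0)"
    unfolding Ex_def by (intro sum.cong refl) auto
  thus ?thesis using assms finV by simp
qed

lemma m_nonneg: "msteps V E (1/2) r t S W \<ge> 0"
  by (induction t arbitrary: S) (auto intro!: sum_nonneg mult_nonneg_nonneg T_nonneg)

lemma Ex_mono: "(\<And>W. W \<subseteq> V \<Longrightarrow> \<phi> W \<le> \<psi> W) \<Longrightarrow> Ex t \<phi> S \<le> Ex t \<psi> S"
  unfolding Ex_def by (intro sum_mono mult_left_mono m_nonneg) auto

lemma Ex_const: "S \<subseteq> V \<Longrightarrow> Ex t (\<lambda>_. c) S = c"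
proof (induction t arbitrary: S)
  case 0 thus ?case by (simp add: Ex_0)
next
  case (Suc t)
  have "Ex (Suc t) (\<lambda>_. c) S = (\<Sum>U\<in>Pow V. T S U * c)"
    unfolding Ex_Suc using Suc.IH by (intro sum.cong refl) auto
  also have "\<dots> = c" using rowsum[OF Suc.prems] by (simp add: sum_distrib_right[symmetric])
  finally show ?case .
qed

lemma Ex_add: "Ex t (\<lambda>W. a * \<phi> W + b * \<psi> W) S = a * Ex t \<phi> S + b * Ex t \<psi> S"
  unfolding Ex_def by (simp add: sum.distrib sum_distrib_left algebra_simps)

lemma Ex_card: "S \<subseteq> V \<Longrightarrow> Ex t (\<lambda>W. real (card W)) S \<ge> real (card S)"
proof (induction t arbitrary: S)
  case 0 thus ?case by (simp add: Ex_0)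
next
  case (Suc t)
  have "Ex (Suc t) (\<lambda>W. real (card W)) S \<ge> (\<Sum>U\<in>Pow V. T S U * real (card U))"
    unfolding Ex_Suc using Suc.IH by (intro sum_mono mult_left_mono T_nonneg) auto
  thus ?case using drift[OF Suc.prems] by linarith
qed

definition ind :: "'a set \<Rightarrow> real" where "ind W = (if W = V then 1 else 0)"

lemma Ex_sq: "S \<subseteq> V \<Longrightarrow> Ex t (\<lambda>W. real (card W) ^ 2) S
   \<ge> real (card S) ^ 2 + 1 / (2 * real (card V) ^ 2) * (\<Sum>s<t. Ex s tau S)"
proof (induction t arbitrary: S)
  case 0 thus ?case by (simp add: Ex_0)
next
  case (Suc t)
  let ?d = "1 / (2 * real (card V) ^ 2)"
  have "Ex (Suc t) (\<lambda>W. real (card W) ^ 2) S \<ge>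
     (\<Sum>U\<in>Pow V. T S U * (real (card U) ^ 2 + ?d * (\<Sum>s<t. Ex s tau U)))"
    unfolding Ex_Suc using Suc.IH by (intro sum_mono mult_left_mono T_nonneg) auto
  also have "(\<Sum>U\<in>Pow V. T S U * (real (card U) ^ 2 + ?d * (\<Sum>s<t. Ex s tau U)))
     = (\<Sum>U\<in>Pow V. T S U * real (card U) ^ 2) + ?d * (\<Sum>s<t. \<Sum>U\<in>Pow V. T S U * Ex s tau U)"
    by (simp add: distrib_left sum.distrib sum_distrib_left sum.swap[of _ _ "{..<t}"] algebra_simps sum_divide_distrib)
  also have "(\<Sum>s<t. \<Sum>U\<in>Pow V. T S U * Ex s tau U) = (\<Sum>s<t. Ex (Suc s) tau S)"
    by (simp add: Ex_Suc)
  finally have 1: "Ex (Suc t) (\<lambda>W. real (card W) ^ 2) S \<ge>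
     (\<Sum>U\<in>Pow V. T S U * real (card U) ^ 2) + ?d * (\<Sum>s<t. Ex (Suc s) tau S)" .
  have 2: "(\<Sum>s<Suc t. Ex s tau S) = tau S + (\<Sum>s<t. Ex (Suc s) tau S)"
    by (subst sum.lessThan_Suc_shift) (simp add: Ex_0[OF Suc.prems])
  show ?case using 1 2 second[OF Suc.prems] by (simp add: distrib_left)
qed

lemma Ex_ind_mono: "S \<subseteq> V \<Longrightarrow> Ex t ind S \<le> Ex (Suc t) ind S"
proof (induction t arbitrary: S)
  case 0
  have e: "Ex (Suc 0) ind S = (\<Sum>U\<in>Pow V. T S U * ind U)"
    unfolding Ex_Suc by (intro sum.cong refl) (simp add: Ex_0)
  show ?case
  proof (cases "S = V")
    case True
    thus ?thesis unfolding e using absorb[of ind] by (simp add: Ex_0)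
  next
    case False
    thus ?thesis unfolding e using 0 by (simp add: Ex_0 ind_def, intro sum_nonneg) (simp add: T_nonneg)
  qed
next
  case (Suc t)
  have a: "Ex (Suc (Suc t)) ind S = (\<Sum>U\<in>Pow V. T S U * Ex (Suc t) ind U)" by (rule Ex_Suc)
  have b: "Ex (Suc t) ind S = (\<Sum>U\<in>Pow V. T S U * Ex t ind U)" by (rule Ex_Suc)
  show ?case unfolding a b
    using Suc.IH by (intro sum_mono mult_left_mono T_nonneg) auto
qed

lemma m_Ex: "msteps V E (1/2) r t S V = Ex t ind S"
proof -
  have "Ex t ind S = (\<Sum>W\<in>Pow V. if W = V then msteps V E (1/2) r t S W else 0)"
    unfolding Ex_def ind_def by (intro sum.cong refl) auto
  thus ?thesis using finV by simp
qed

lemma main: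
  assumes S0: "S0 \<subseteq> V"
  shows "fp V E (1/2) r S0 \<ge> real (card S0) / real (card V)"
proof -
  define X where "X t = msteps V E (1/2) r t S0 V" for t
  define n where "n = real (card V)"
  define k where "k = real (card S0)"
  define d where "d = 1 / (2 * n ^ 2)"
  have n0: "n > 0" using n2 by (simp add: n_def)
  have d0: "d > 0" using n0 by (simp add: d_def)
  have inc: "incseq X"
    unfolding X_def m_Ex by (rule incseq_SucI) (rule Ex_ind_mono[OF S0])
  have le1: "X t \<le> 1" for t
  proof -
    have "X t \<le> Ex t (\<lambda>_. 1) S0" unfolding X_def m_Ex by (rule Ex_mono) (simp add: ind_def)
    thus ?thesis using Ex_const[OF S0] by simp
  qed
  obtain L where L: "X \<longlonglongrightarrow> L" "\<And>i. X i \<le> L"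
    using incseq_convergent[OF inc, of 1] le1 by blast
  have XX: "(\<lambda>t. msteps V E (1/2) r t S0 V) = X" by (simp add: X_def fun_eq_iff)
  have fpL: "fp V E (1/2) r S0 = L" unfolding fp_def XX using limI[OF L(1)] .
  have tau_nn: "Ex t tau S0 \<ge> 0" for t
  proof -
    have "Ex t (\<lambda>_. 0) S0 \<le> Ex t tau S0" by (rule Ex_mono) (simp add: tau_def)
    thus ?thesis using Ex_const[OF S0] by simp
  qed
  have lowX: "X t \<ge> k / n - Ex t tau S0" for t
  proof -
    have "k \<le> Ex t (\<lambda>W. real (card W)) S0" using Ex_card[OF S0] by (simp add: k_def)
    also have "\<dots> \<le> Ex t (\<lambda>W. n * ind W + n * tau W) S0"
    proof (rule Ex_mono)
      fix W assume W: "W \<subseteq> V"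
      have "card W \<le> card V" using card_mono[OF finV W] .
      thus "real (card W) \<le> n * ind W + n * tau W"
        using W by (auto simp: ind_def tau_def n_def)
    qed
    also have "\<dots> = n * X t + n * Ex t tau S0" by (simp add: Ex_add X_def m_Ex)
    finally have "k \<le> n * (X t + Ex t tau S0)" by (simp add: distrib_left)
    hence "k / n \<le> X t + Ex t tau S0" using n0 by (simp add: divide_le_eq mult.commute)
    thus ?thesis by linarith
  qed
  have sumb: "d * (\<Sum>s<t. Ex s tau S0) \<le> n ^ 2" for t
  proof -
    have "Ex t (\<lambda>W. real (card W) ^ 2) S0 \<le> Ex t (\<lambda>_. n ^ 2) S0"
    proof (rule Ex_mono)
      fix W assume W: "W \<subseteq> V"
      have "card W \<le> card V" using card_mono[OF finV W] .
      thus "real (card W) ^ 2 \<le> n ^ 2" by (simp add: n_def power_mono)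
    qed
    hence "Ex t (\<lambda>W. real (card W) ^ 2) S0 \<le> n ^ 2" using Ex_const[OF S0] by simp
    moreover have "Ex t (\<lambda>W. real (card W) ^ 2) S0 \<ge> k ^ 2 + d * (\<Sum>s<t. Ex s tau S0)"
      using Ex_sq[OF S0, of t] by (simp add: k_def d_def n_def)
    moreover have "k ^ 2 \<ge> 0" by simp
    ultimately show ?thesis by linarith
  qed
  show ?thesis
  proof (rule ccontr)
    assume "\<not> ?thesis"
    hence lt: "L < k / n" using fpL by (simp add: k_def n_def)
    define e where "e = k / n - L"
    have e0: "e > 0" using lt by (simp add: e_def)
    have "\<exists>t. Ex t tau S0 < e"
    proof (rule ccontr)
      assume "\<not> (\<exists>t. Ex t tau S0 < e)"
      hence ge: "Ex t tau S0 \<ge> e" for t by (simp add: not_less)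
      obtain t :: nat where t: "real t > n ^ 2 / (d * e)" using reals_Archimedean2 by blast
      have "(\<Sum>s<t. e) \<le> (\<Sum>s<t. Ex s tau S0)" by (rule sum_mono) (rule ge)
      hence "real t * e \<le> (\<Sum>s<t. Ex s tau S0)" by simp
      hence "d * (real t * e) \<le> n ^ 2" using sumb[of t] d0 by (meson mult_left_mono less_imp_le order_trans)
      moreover have "n ^ 2 < real t * (d * e)" using t d0 e0 by (simp add: divide_less_eq)
      ultimately show False by (simp add: algebra_simps)
    qed
    then obtain t where "Ex t tau S0 < e" by blast
    hence "X t > L" using lowX[of t] by (simp add: e_def)
    thus False using L(2)[of t] by simp
  qed
qed

end

theorem mainTheorem6:
  fixes V :: "'a set" and E :: "'a \<Rightarrow> 'a \<Rightarrow> bool" and r :: real and S0 :: "'a set"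
  assumes "conn_graph V E" and "r \<ge> 1" and "S0 \<subseteq> V"
  shows "fp V E (1/2) r S0 \<ge> real (card S0) / real (card V)"
proof -
  interpret mp V E r using assms(1,2) by unfold_locales
  show ?thesis by (rule main[OF assms(3)])
qed

end
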